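(* Let $\mathbb{K}$ be a field and $f=a_0(x)+a_1(x)y+\cdots+a_n(x)y^n\in\mathbb{K}[x,y]$ with $n\geq 2$, $a_0,\ldots,a_n\in\mathbb{K}[x]$, $a_0a_n\neq 0$, such that $f$ has no nonconstant factor in $\mathbb{K}[x]$ and $\deg a_0>\max\{\deg a_1,\ldots,\deg a_n\}$. If $a_0$ is irreducible in $\mathbb{K}[x]$, or if $a_n$ is irreducible in $\mathbb{K}[x]$ and $\deg a_n\geq\deg a_0-\deg q$ with $q\in\mathbb{K}[x]$ an irreducible factor of $a_0$ of smallest degree, then $f$ is irreducible over $\mathbb{K}[x]$.
   Context: $f$ is regarded as a polynomial in $y$ with coefficients in $\mathbb{K}[x]$; irreducibility over $\mathbb{K}[x]$ means irreducibility in $\mathbb{K}[x][y]$. *)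

theory Defs
  imports "HOL-Computational_Algebra.Polynomial_Factorial"
begin

end

theory Submission imports Defs begin

lemma sum_small:
  fixes F :: "'b \<Rightarrow> 'a::field poly"
  assumes "finite S" "\<forall>x\<in>S. F x = 0 \<or> degree (F x) < m"
  shows "sum F S = 0 \<or> degree (sum F S) < m"
  using assms
proof (induction S rule: finite_induct)
  case empty then show ?case by simp
next
  case (insert x S)
  then have h: "sum F S = 0 \<or> degree (sum F S) < m" "F x = 0 \<or> degree (F x) < m" by auto
  show ?case using h insert(1,2) by (auto intro: degree_add_less)
qed

lemma top_index:
  fixes g h :: "'a::field poly poly"
  assumes g0: "g \<noteq> 0" and h0: "h \<noteq> 0"
    and dom: "\<forall>i\<ge>1. degree (coeff (g*h) i) < degree (coeff (g*h) 0)"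
    and j: "1 \<le> j" "j \<le> degree g"
  shows "degree (coeff g j) < degree (coeff g 0)"
proof -
  define Dg where "Dg = Max ((\<lambda>i. degree (coeff g i)) ` {..degree g})"
  define Dh where "Dh = Max ((\<lambda>i. degree (coeff h i)) ` {..degree h})"
  define Jg where "Jg = Max {i. i \<le> degree g \<and> degree (coeff g i) = Dg}"
  define Jh where "Jh = Max {i. i \<le> degree h \<and> degree (coeff h i) = Dh}"
  have Dg_le: "degree (coeff g i) \<le> Dg" for i
    by (cases "i \<le> degree g") (auto simp: Dg_def coeff_eq_0)
  have Dh_le: "degree (coeff h i) \<le> Dh" for i
    by (cases "i \<le> degree h") (auto simp: Dh_def coeff_eq_0)
  have "Dg \<in> (\<lambda>i. degree (coeff g i)) ` {..degree g}" unfolding Dg_def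
    by (rule Max_in) auto
  then have neg: "{i. i \<le> degree g \<and> degree (coeff g i) = Dg} \<noteq> {}" by auto
  have "Dh \<in> (\<lambda>i. degree (coeff h i)) ` {..degree h}" unfolding Dh_def
    by (rule Max_in) auto
  then have neh: "{i. i \<le> degree h \<and> degree (coeff h i) = Dh} \<noteq> {}" by auto
  have Jg_in: "Jg \<le> degree g \<and> degree (coeff g Jg) = Dg"
    using Max_in[OF _ neg] unfolding Jg_def by auto
  have Jh_in: "Jh \<le> degree h \<and> degree (coeff h Jh) = Dh"
    using Max_in[OF _ neh] unfolding Jh_def by auto
  have Jg_max: "i \<le> degree g \<Longrightarrow> degree (coeff g i) = Dg \<Longrightarrow> i \<le> Jg" for i
    unfolding Jg_def by (rule Max_ge) auto
  have Jh_max: "i \<le> degree h \<Longrightarrow> degree (coeff h i) = Dh \<Longrightarrow> i \<le> Jh" for i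
    unfolding Jh_def by (rule Max_ge) auto
  have gJ0: "coeff g Jg \<noteq> 0"
  proof
    assume "coeff g Jg = 0"
    then have "Dg = 0" using Jg_in by simp
    then have "\<forall>i. coeff g i = 0 \<or> degree (coeff g i) = 0" using Dg_le by (metis le_zero_eq)
    show False
    proof (cases "Jg = degree g")
      case True then show ?thesis using \<open>coeff g Jg = 0\<close> g0 by simp
    next
      case False
      have "degree (coeff g (degree g)) = Dg" using Dg_le \<open>Dg = 0\<close> by (metis le_zero_eq)
      then have "degree g \<le> Jg" using Jg_max by simp
      then show ?thesis using False Jg_in by simp
    qed
  qed
  have hJ0: "coeff h Jh \<noteq> 0"
  proof
    assume "coeff h Jh = 0"
    then have "Dh = 0" using Jh_in by simp
    show False
    proof (cases "Jh = degree h")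
      case True then show ?thesis using \<open>coeff h Jh = 0\<close> h0 by simp
    next
      case False
      have "degree (coeff h (degree h)) = Dh" using Dh_le \<open>Dh = 0\<close> by (metis le_zero_eq)
      then have "degree h \<le> Jh" using Jh_max by simp
      then show ?thesis using False Jh_in by simp
    qed
  qed
  define N where "N = Jg + Jh"
  define F where "F = (\<lambda>i. coeff g i * coeff h (N - i))"
  have cN: "coeff (g*h) N = F Jg + sum F ({..N} - {Jg})"
    unfolding coeff_mult F_def
    by (subst sum.remove[of _ Jg]) (auto simp: N_def)
  have FJ: "degree (F Jg) = Dg + Dh"
    using gJ0 hJ0 Jg_in Jh_in by (simp add: F_def N_def degree_mult_eq)
  have rest: "\<forall>i\<in>{..N} - {Jg}. F i = 0 \<or> degree (F i) < Dg + Dh"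
  proof
    fix i assume i: "i \<in> {..N} - {Jg}"
    show "F i = 0 \<or> degree (F i) < Dg + Dh"
    proof (cases "coeff g i = 0 \<or> coeff h (N - i) = 0")
      case True then show ?thesis by (auto simp: F_def)
    next
      case False
      then have nz: "coeff g i \<noteq> 0" "coeff h (N - i) \<noteq> 0" by auto
      have ig: "i \<le> degree g" using nz(1) le_degree by blast
      have ih: "N - i \<le> degree h" using nz(2) le_degree by blast
      have "degree (coeff g i) < Dg \<or> degree (coeff h (N - i)) < Dh"
      proof (cases "i < Jg")
        case True
        then have "N - i > Jh" using N_def by simp
        then have "degree (coeff h (N - i)) \<noteq> Dh" using Jh_max ih by force
        then show ?thesis using Dh_le le_neq_implies_less by blast
      next
        case False
        then have "i > Jg" using i by auto
        then have "degree (coeff g i) \<noteq> Dg" using Jg_max ig by force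
        then show ?thesis using Dg_le le_neq_implies_less by blast
      qed
      then show ?thesis using nz Dg_le[of i] Dh_le[of "N-i"]
        by (auto simp: F_def degree_mult_eq)
    qed
  qed
  have degN: "degree (coeff (g*h) N) = Dg + Dh"
  proof -
    from sum_small[OF _ rest] have "sum F ({..N} - {Jg}) = 0 \<or> degree (sum F ({..N} - {Jg})) < degree (F Jg)"
      using FJ by simp
    then show ?thesis using cN FJ
      by (metis add.right_neutral degree_add_eq_left)
  qed
  have c0: "coeff (g*h) 0 = coeff g 0 * coeff h 0" by (simp add: coeff_mult)
  have "degree (coeff (g*h) 0) \<le> Dg + Dh"
  proof (cases "coeff g 0 = 0 \<or> coeff h 0 = 0")
    case True then show ?thesis using c0 by auto
  next
    case False then show ?thesis using c0 Dg_le[of 0] Dh_le[of 0] by (simp add: degree_mult_eq)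
  qed
  then have "N = 0" using dom degN by (metis not_less not_less_zero less_one linorder_le_less_linear)
  then have "Jg = 0" by (simp add: N_def)
  then have "degree (coeff g 0) = Dg" using Jg_in by simp
  moreover have "degree (coeff g j) \<noteq> Dg" using Jg_max[of j] j \<open>Jg = 0\<close> by auto
  ultimately show ?thesis using Dg_le[of j] by simp
qed

lemma ex_irred_dvd:
  fixes p :: "'a::field poly"
  shows "degree p > 0 \<Longrightarrow> \<exists>r. irreducible r \<and> r dvd p"
proof (induction "degree p" arbitrary: p rule: less_induct)
  case less
  show ?case
  proof (cases "irreducible p")
    case True then show ?thesis using dvd_refl by blast
  next
    case False
    have p0: "p \<noteq> 0" using less.prems by auto
    have "\<not> is_unit p" using less.prems is_unit_iff_degree[OF p0] by auto
    then obtain s t where st: "p = s * t" "\<not> is_unit s" "\<not> is_unit t"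
      using False p0 unfolding irreducible_def by blast
    have s0: "s \<noteq> 0" and t0: "t \<noteq> 0" using st p0 by auto
    have ds: "degree s > 0" using st(2) is_unit_iff_degree[OF s0] by auto
    have dt: "degree t > 0" using st(3) is_unit_iff_degree[OF t0] by auto
    have "degree s < degree p" using st(1) s0 t0 dt degree_mult_eq by fastforce
    then obtain r where "irreducible r" "r dvd s" using less.hyps ds by blast
    then show ?thesis using st(1) dvd_mult2 by blast
  qed
qed

lemma case2_aux:
  fixes b0 c0 ct q a0 :: "'a::field poly"
  assumes "a0 = b0 * c0" "b0 \<noteq> 0" "c0 \<noteq> 0" "degree b0 > 0" "degree ct < degree c0"
    and "\<forall>r. irreducible r \<and> r dvd a0 \<longrightarrow> degree q \<le> degree r"
    and "degree ct + degree q \<ge> degree a0"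
  shows False
proof -
  obtain r where r: "r dvd b0" "irreducible r" using ex_irred_dvd assms(4) by blast
  moreover have "r dvd a0" using r assms(1) by simp
  ultimately have "degree q \<le> degree r" using assms(6) by blast
  also have "degree r \<le> degree b0" using r assms(2) dvd_imp_degree_le by blast
  finally have "degree q \<le> degree b0" .
  moreover have "degree a0 = degree b0 + degree c0" using assms(1,2,3) degree_mult_eq by blast
  ultimately show False using assms(5,7) by linarith
qed

theorem corollary3:
  fixes f :: "'a::field poly poly" and n :: nat
  assumes n_def: "n = degree f"
    and n_ge: "n \<ge> 2"
    and a0an: "coeff f 0 * coeff f n \<noteq> 0"
    and no_const_factor: "\<forall>c :: 'a poly. [:c:] dvd f \<longrightarrow> degree c = 0"
    and deg_dom: "\<forall>i\<in>{1..n}. degree (coeff f i) < degree (coeff f 0)"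
    and cases: "irreducible (coeff f 0) \<or>
       (irreducible (coeff f n) \<and>
        (\<exists>q :: 'a poly. irreducible q \<and> q dvd coeff f 0 \<and>
           (\<forall>r. irreducible r \<and> r dvd coeff f 0 \<longrightarrow> degree q \<le> degree r) \<and>
           degree (coeff f n) + degree q \<ge> degree (coeff f 0)))"
  shows "irreducible f"
proof (rule irreducibleI)
  have f0: "f \<noteq> 0" using a0an by auto
  show "f \<noteq> 0" by (fact f0)
  show "\<not> is_unit f" using f0 n_def n_ge dvd_imp_degree_le[of f 1] by auto
  have dpos: "degree (coeff f 0) > 0" using deg_dom[rule_format, of 1] n_ge by auto
  have dom: "\<forall>i\<ge>1. degree (coeff f i) < degree (coeff f 0)"
  proof (intro allI impI)
    fix i :: nat assume "1 \<le> i"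
    show "degree (coeff f i) < degree (coeff f 0)"
    proof (cases "i \<le> n")
      case True then show ?thesis using deg_dom \<open>1 \<le> i\<close> by auto
    next
      case False then show ?thesis using dpos n_def by (simp add: coeff_eq_0)
    qed
  qed
  fix g h assume fgh: "f = g * h"
  show "is_unit g \<or> is_unit h"
  proof (rule ccontr)
    assume nu: "\<not> (is_unit g \<or> is_unit h)"
    have g0: "g \<noteq> 0" and h0: "h \<noteq> 0" using f0 fgh by auto
    have dg: "degree g \<ge> 1"
    proof (rule ccontr)
      assume "\<not> degree g \<ge> 1"
      then have "g = [:coeff g 0:]" by (metis degree_0_id less_one not_le)
      then have "[:coeff g 0:] dvd f" using fgh by (metis dvd_triv_left)
      then have "degree (coeff g 0) = 0" using no_const_factor by blast
      moreover have "coeff g 0 \<noteq> 0" using g0 \<open>g = [:coeff g 0:]\<close> by (metis pCons_0_0)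
      ultimately have "is_unit (coeff g 0)" using is_unit_iff_degree by blast
      then have "is_unit [:coeff g 0:]" by (simp only: is_unit_const_poly_iff)
      then have "is_unit g" using \<open>g = [:coeff g 0:]\<close> by simp
      then show False using nu by blast
    qed
    have dh: "degree h \<ge> 1"
    proof (rule ccontr)
      assume "\<not> degree h \<ge> 1"
      then have "h = [:coeff h 0:]" by (metis degree_0_id less_one not_le)
      then have "[:coeff h 0:] dvd f" using fgh by (metis dvd_triv_right)
      then have "degree (coeff h 0) = 0" using no_const_factor by blast
      moreover have "coeff h 0 \<noteq> 0" using h0 \<open>h = [:coeff h 0:]\<close> by (metis pCons_0_0)
      ultimately have "is_unit (coeff h 0)" using is_unit_iff_degree by blast
      then have "is_unit [:coeff h 0:]" by (simp only: is_unit_const_poly_iff)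
      then have "is_unit h" using \<open>h = [:coeff h 0:]\<close> by simp
      then show False using nu by blast
    qed
    have tg: "degree (lead_coeff g) < degree (coeff g 0)"
      using top_index[OF g0 h0 dom[unfolded fgh] dg] by simp
    have th: "degree (lead_coeff h) < degree (coeff h 0)"
      using top_index[OF h0 g0 _ dh] dom[unfolded fgh] by (simp add: mult.commute)
    have c0: "coeff f 0 = coeff g 0 * coeff h 0" using fgh by (simp add: coeff_mult)
    have cn: "coeff f n = lead_coeff g * lead_coeff h"
      using fgh n_def by (simp add: lead_coeff_mult)
    have b0: "coeff g 0 \<noteq> 0" "coeff h 0 \<noteq> 0" using a0an c0 by auto
    have bn: "lead_coeff g \<noteq> 0" "lead_coeff h \<noteq> 0" using g0 h0 by auto
    have pb: "degree (coeff g 0) > 0" "degree (coeff h 0) > 0" using tg th by auto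
    from cases show False
    proof
      assume "irreducible (coeff f 0)"
      then have "is_unit (coeff g 0) \<or> is_unit (coeff h 0)" using irreducibleD[OF _ c0] by blast
      then show False using pb is_unit_iff_degree[OF b0(1)] is_unit_iff_degree[OF b0(2)] by auto
    next
      assume c2: "irreducible (coeff f n) \<and>
        (\<exists>q :: 'a poly. irreducible q \<and> q dvd coeff f 0 \<and>
           (\<forall>r. irreducible r \<and> r dvd coeff f 0 \<longrightarrow> degree q \<le> degree r) \<and>
           degree (coeff f n) + degree q \<ge> degree (coeff f 0))"
      obtain q where q0: "irreducible q \<and> q dvd coeff f 0 \<and>
           (\<forall>r. irreducible r \<and> r dvd coeff f 0 \<longrightarrow> degree q \<le> degree r) \<and>
           degree (coeff f n) + degree q \<ge> degree (coeff f 0)"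
        using conjunct2[OF c2] by (rule exE)
      have q1: "\<forall>r. irreducible r \<and> r dvd coeff f 0 \<longrightarrow> degree q \<le> degree r"
        using q0 by (elim conjE) assumption
      have q2: "degree (coeff f n) + degree q \<ge> degree (coeff f 0)"
        using q0 by (elim conjE) assumption
      note q = q1 q2
      from c2 have "is_unit (lead_coeff g) \<or> is_unit (lead_coeff h)" using irreducibleD[OF _ cn] by blast
      then show False
      proof
        assume "is_unit (lead_coeff g)"
        then have "degree (coeff f n) = degree (lead_coeff h)"
          using cn degree_mult_eq[OF bn] is_unit_iff_degree[OF bn(1)] by simp
        then have "degree (lead_coeff h) + degree q \<ge> degree (coeff f 0)" using q(2) by simp
        then show False by (rule case2_aux[OF c0 b0 pb(1) th q(1)])
      next
        assume "is_unit (lead_coeff h)"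
        then have "degree (coeff f n) = degree (lead_coeff g)"
          using cn degree_mult_eq[OF bn] is_unit_iff_degree[OF bn(2)] by simp
        moreover have "coeff f 0 = coeff h 0 * coeff g 0" using c0 by (simp add: mult.commute)
        moreover have "degree (lead_coeff g) + degree q \<ge> degree (coeff f 0)" using q(2) calculation(1) by simp
        ultimately show False using case2_aux[OF _ b0(2) b0(1) pb(2) tg q(1)] by blast
      qed
    qed
  qed
qed

end
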